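(* Let $\phi$ be the real root of $x^3=x^2+x+1$ and let $\phi_1$ be one of its two non-real roots. Define \[\psi_1=\frac{\phi_1^3+\phi_1^2}{\phi_1^2+2\phi_1+3},\qquad \zeta_1=\frac{\phi_1^3}{\phi_1^2+2\phi_1+3}.\] For integers $k,l$ put \[\alpha=\frac{k\phi^2+(k+l)\phi^3}{\phi^2+2\phi+3},\qquad \beta=\left|2(k\psi_1+l\zeta_1)\right|.\] Then for all integers $k,l$, $|\alpha|\le |k|+|l|$ and $\beta\ge \frac{|k|+|l|}{31}$.
   Context: The value of $\beta$ does not depend on which of the two complex-conjugate non-real roots is chosen as $\phi_1$. *)

theory Defs
  imports Complex_Main
begin

end

theory Submission
  imports Defs
begin

lemma phi_bounds: fixes p :: real assumes "p^3 = p^2+p+1" shows "-1 \<le> p \<and> p \<le> 2"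
proof -
  have f1: "p^3-p^2-p-1 = (p-2)*(p^2+p+1) + 1" by algebra
  have f2: "p^3-p^2-p-1 = (p+1)*(p-1)^2 - 2" by algebra
  have q0: "p^2+p+1 = (p+1/2)^2+3/4" by algebra
  have q: "p^2+p+1 > 0" unfolding q0 by (simp add: add_nonneg_pos)
  have "p \<le> 2"
  proof (rule ccontr)
    assume "\<not> p \<le> 2" then have "(p-2)*(p^2+p+1) > 0" using q by simp
    then show False using assms f1 by simp
  qed
  moreover have "-1 \<le> p"
  proof (rule ccontr)
    assume "\<not> -1 \<le> p" then have "(p+1)*(p-1)^2 \<le> 0" by (simp add: mult_nonpos_nonneg)
    then show False using assms f2 by simp
  qed
  ultimately show ?thesis by simp
qed

lemma a_bounds: fixes a :: real assumes "4*a^3 - 4*a^2 + 1 = 0" shows "-0.42 < a \<and> a < -0.419"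
proof -
  have fa: "4*a^3 - 4*a^2 + 1 = 4*(a^2*(a-1)) + 1" by algebra
  have "a < 0" proof (rule ccontr)
    assume "\<not> a < 0" then have "a \<ge> 0" by simp
    have "4*a^3 - 4*a^2 + 1 = (a-2/3)^2*(4*a+4/3) + 11/27" by algebra
    moreover have "(a-2/3)^2*(4*a+4/3) \<ge> 0" using `a\<ge>0` by simp
    ultimately show False using assms by simp qed
  have "\<not> a \<le> -0.42"
  proof
    assume h: "a \<le> -0.42"
    have "0.42*0.42 \<le> (-a)*(-a)" using h by (intro mult_mono) auto
    then have s: "a^2 \<ge> 0.1764" by (simp add: power2_eq_square)
    have "a^2 * (1-a) \<ge> 0.1764 * 1.42" using s h by (intro mult_mono) auto
    then show False using assms fa by (simp add: algebra_simps)
  qed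
  moreover have "\<not> a \<ge> -0.419"
  proof
    assume h: "a \<ge> -0.419"
    have "(-a)*(-a) \<le> 0.419*0.419" using h `a<0` by (intro mult_mono) auto
    then have s: "a^2 \<le> 0.175561" by (simp add: power2_eq_square)
    have "a^2 * (1-a) \<le> 0.175561 * 1.419" using s h `a<0` by (intro mult_mono) auto
    then show False using assms fa by (simp add: algebra_simps)
  qed
  ultimately show ?thesis by simp
qed

lemma lin_aux: fixes K L M P x y z :: real
  shows "20*K \<le> x \<Longrightarrow> 15*L \<le> z \<Longrightarrow> -5*M \<le> y \<Longrightarrow> 2*M \<le> K+L \<Longrightarrow> P \<le> 2*(K+L) \<Longrightarrow> 0 \<le> K \<Longrightarrow> 5*P \<le> x + 2*y + z"
  by (smt (verit))

lemma lin_aux2: fixes P S :: real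
  shows "5*P \<le> S \<Longrightarrow> 0 \<le> P \<Longrightarrow> P/961 \<le> S/121"
  by linarith

lemma beta_part: fixes a b k l :: real
  assumes hb: "b^2 = 3*a^2 - 2*a - 1" and ha: "-0.42 < a" "a < -0.419"
  shows "cmod (2 * (complex_of_real k * ((1 - 2*Complex a b + 7*(Complex a b)^2)/22)
              + complex_of_real l * ((5 + Complex a b + 2*(Complex a b)^2)/22))) \<ge> (\<bar>k\<bar>+\<bar>l\<bar>)/31"
    (is "cmod ?w \<ge> _")
proof -
  define A where "A = 8+12*a-14*a^2"
  define B where "B = 7+5*a-4*a^2"
  define C where "C = -2+14*a"
  define E where "E = 1+4*a"
  define c where "c = 3*a^2 - 2*a - 1"
  have re0: "Re ?w = (k*(1-2*a+7*(a^2-b^2)) + l*(5+a+2*(a^2-b^2)))/11"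
    by (simp add: power2_eq_square field_simps)
  have im0: "Im ?w = b*(k*(-2+14*a) + l*(1+4*a))/11"
    by (simp add: power2_eq_square field_simps)
  have re: "Re ?w = (k*A + l*B)/11" unfolding re0 A_def B_def hb by (simp add: algebra_simps)
  have im2: "(Im ?w)^2 = c*(k*C + l*E)^2/121" unfolding im0 C_def E_def c_def
    by (simp add: power_mult_distrib power_divide hb[symmetric])
  have s1: "a^2 \<ge> 0.175561"
  proof -
    have "0.419*0.419 \<le> (-a)*(-a)" using ha by (intro mult_mono) auto
    then show ?thesis by (simp add: power2_eq_square)
  qed
  have s2: "a^2 \<le> 0.1764"
  proof -
    have "(-a)*(-a) \<le> 0.42*0.42" using ha by (intro mult_mono) auto
    then show ?thesis by (simp add: power2_eq_square)
  qed
  have Ab: "0 \<le> A" "A \<le> 0.6" using s1 s2 ha by (auto simp: A_def)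
  have Bb: "4 \<le> B" "B \<le> 4.3" using s1 s2 ha by (auto simp: B_def)
  have Cb: "-7.9 \<le> C" "C \<le> -7.8" using ha by (auto simp: C_def)
  have Eb: "-0.7 \<le> E" "E \<le> -0.6" using ha by (auto simp: E_def)
  have cb: "0.36 \<le> c" "c \<le> 0.38" using s1 s2 ha by (auto simp: c_def)
  define X where "X = A^2 + c*C^2"
  define Y where "Y = A*B + c*C*E"
  define Z where "Z = B^2 + c*E^2"
  have C2: "C^2 \<ge> 7.8*7.8"
  proof -
    have "7.8*7.8 \<le> (-C)*(-C)" using Cb by (intro mult_mono) auto
    then show ?thesis by (simp add: power2_eq_square)
  qed
  have "c*C^2 \<ge> 0.36*(7.8*7.8)" using cb C2 by (intro mult_mono) auto
  then have "c*C^2 \<ge> 21" by simp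
  then have Xb: "X \<ge> 20" unfolding X_def using zero_le_power2[of A] by linarith
  have "B*B \<ge> 4*4" using Bb by (intro mult_mono) auto
  moreover have "c*E^2 \<ge> 0" using cb by simp
  ultimately have Zb: "Z \<ge> 15" by (simp add: Z_def power2_eq_square)
  have y1: "A*B \<le> 0.6*4.3" using Ab Bb by (intro mult_mono) auto
  have y1': "A*B \<ge> 0" using Ab Bb by simp
  have y2: "C*E \<le> 7.9*0.7"
  proof -
    have "(-C)*(-E) \<le> 7.9*0.7" using Cb Eb by (intro mult_mono) auto
    then show ?thesis by simp
  qed
  have y2': "C*E \<ge> 0" using Cb Eb by (simp add: zero_le_mult_iff)
  have y3: "c*(C*E) \<le> 0.38*(7.9*0.7)" apply (rule mult_mono) using cb y2 y2' by auto
  have y3': "c*(C*E) \<ge> 0" using cb y2' by simp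
  have Yb: "\<bar>Y\<bar> \<le> 5" unfolding Y_def using y1 y1' y3 y3' by (simp add: mult.assoc)
  have Q: "(Re ?w)^2 + (Im ?w)^2 = (X*k^2 + 2*(Y*(k*l)) + Z*l^2)/121"
    unfolding re im2 X_def Y_def Z_def by (simp add: power_divide add_divide_distrib[symmetric]) (simp add: power2_eq_square algebra_simps)
  have q1: "X*k^2 \<ge> 20*k^2" using Xb by (simp add: mult_right_mono)
  have q2: "Z*l^2 \<ge> 15*l^2" using Zb by (simp add: mult_right_mono)
  have q3: "\<bar>Y*(k*l)\<bar> \<le> 5*\<bar>k*l\<bar>" using Yb by (simp add: abs_mult mult_right_mono)
  have q4: "2*\<bar>k*l\<bar> \<le> k^2 + l^2"
  proof -
    have "0 \<le> (\<bar>k\<bar>-\<bar>l\<bar>)^2" by simp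
    then show ?thesis by (simp add: power2_eq_square algebra_simps abs_mult)
  qed
  have q5: "(\<bar>k\<bar>+\<bar>l\<bar>)^2 \<le> 2*(k^2+l^2)"
  proof -
    have "(\<bar>k\<bar>+\<bar>l\<bar>)^2 = k^2 + l^2 + 2*\<bar>k*l\<bar>" by (simp add: power2_eq_square algebra_simps abs_mult)
    then show ?thesis using q4 by simp
  qed
  have lb: "Y*(k*l) \<ge> -5*\<bar>k*l\<bar>" using q3 by linarith
  have S: "X*k^2 + 2*(Y*(k*l)) + Z*l^2 \<ge> 5*(\<bar>k\<bar>+\<bar>l\<bar>)^2" by (rule lin_aux[OF q1 q2 lb q4 q5 zero_le_power2[of k]])
  have e31: "((\<bar>k\<bar>+\<bar>l\<bar>)/31)^2 = (\<bar>k\<bar>+\<bar>l\<bar>)^2/961" by (simp add: power_divide)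
  have "((\<bar>k\<bar>+\<bar>l\<bar>)/31)^2 \<le> (Re ?w)^2 + (Im ?w)^2"
    unfolding Q e31 by (rule lin_aux2[OF S zero_le_power2])
  then show ?thesis unfolding norm_complex_def by (rule real_le_rsqrt)
qed

lemma alpha_part: fixes p k l :: real assumes "p^3 = p^2+p+1"
  shows "\<bar>(k * p^2 + (k+l) * p^3) / (p^2 + 2*p + 3)\<bar> \<le> \<bar>k\<bar> + \<bar>l\<bar>"
proof -
  have b: "-1 \<le> p" "p \<le> 2" using phi_bounds[OF assms] by auto
  have D0: "p^2 + 2*p + 3 = (p+1)^2 + 2" by algebra
  have Dpos: "p^2 + 2*p + 3 > 0" unfolding D0 by (simp add: add_nonneg_pos)
  have num: "k * p^2 + (k+l) * p^3 = k*(2*p^2+p+1) + l*(p^2+p+1)"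
    unfolding assms by (simp add: algebra_simps)
  have pp: "p^2 \<le> p + 2"
  proof -
    have "(p+1)*(2-p) \<ge> 0" using b by simp
    then show ?thesis by (simp add: power2_eq_square algebra_simps)
  qed
  have c2: "0 \<le> p^2+p+1" "p^2+p+1 \<le> p^2+2*p+3"
  proof -
    have e: "p^2+p+1 = (p+1/2)^2 + 3/4" by algebra
    show "0 \<le> p^2+p+1" unfolding e by (simp add: add_nonneg_pos)
    show "p^2+p+1 \<le> p^2+2*p+3" using b by simp
  qed
  have c1: "0 \<le> 2*p^2+p+1" "2*p^2+p+1 \<le> p^2+2*p+3"
    using c2(1) zero_le_power2[of p] pp by linarith+
  have "\<bar>k*(2*p^2+p+1) + l*(p^2+p+1)\<bar> \<le> \<bar>k*(2*p^2+p+1)\<bar> + \<bar>l*(p^2+p+1)\<bar>"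
    by (rule abs_triangle_ineq)
  also have "\<dots> = \<bar>k\<bar>*(2*p^2+p+1) + \<bar>l\<bar>*(p^2+p+1)"
    using c1 c2 by (simp add: abs_mult)
  also have "\<dots> \<le> \<bar>k\<bar>*(p^2+2*p+3) + \<bar>l\<bar>*(p^2+2*p+3)"
    by (rule add_mono[OF mult_left_mono[OF c1(2)] mult_left_mono[OF c2(2)]]) simp_all
  also have "\<dots> = (\<bar>k\<bar>+\<bar>l\<bar>) * (p^2+2*p+3)" by (simp add: algebra_simps)
  finally have "\<bar>k*(2*p^2+p+1) + l*(p^2+p+1)\<bar> \<le> (\<bar>k\<bar>+\<bar>l\<bar>) * (p^2+2*p+3)" .
  then have "\<bar>k * p^2 + (k+l) * p^3\<bar> \<le> (\<bar>k\<bar>+\<bar>l\<bar>) * (p^2+2*p+3)" unfolding num .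
  then have "\<bar>k * p^2 + (k+l) * p^3\<bar> / (p^2+2*p+3) \<le> \<bar>k\<bar>+\<bar>l\<bar>"
    by (subst pos_divide_le_eq[OF Dpos])
  then show ?thesis unfolding abs_div_pos[OF Dpos] .
qed

lemma cubic_parts: fixes a b :: real assumes "(Complex a b)^3 = (Complex a b)^2 + Complex a b + 1" "b \<noteq> 0"
  shows "b^2 = 3*a^2 - 2*a - 1" "4*a^3 - 4*a^2 + 1 = 0"
proof -
  have e: "a^3 - 3*a*b^2 = a^2 - b^2 + a + 1" "3*a^2*b - b^3 = 2*a*b + b"
    using assms(1) by (simp_all add: complex_eq_iff power3_eq_cube power2_eq_square algebra_simps)
  from e(2) have "b*(3*a^2 - b^2 - 2*a - 1) = 0" by algebra
  with assms(2) show 1: "b^2 = 3*a^2 - 2*a - 1" by simp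
  from e(1) 1 show "4*a^3 - 4*a^2 + 1 = 0" by algebra
qed

lemma field_id: fixes x :: complex assumes h3: "x^3 = x^2 + x + 1"
  shows "(x^2+2*x+3) * (8 - 5*x + x^2) = 22"
    "(x^3+x^2)*(8 - 5*x + x^2) = 1 - 2*x + 7*x^2"
    "x^3*(8 - 5*x + x^2) = 5 + x + 2*x^2"
proof -
  have h4: "x^4 = 2*x^2 + 2*x + 1"
  proof -
    have "x^4 = x * x^3" by algebra
    also have "\<dots> = x*(x^2 + x + 1)" by (simp add: h3)
    also have "\<dots> = x^3 + x^2 + x" by algebra
    also have "\<dots> = 2*x^2 + 2*x + 1" by (simp add: h3)
    finally show ?thesis .
  qed
  have h5: "x^5 = 4*x^2 + 3*x + 2"
  proof -
    have "x^5 = x * x^4" by algebra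
    also have "\<dots> = x*(2*x^2 + 2*x + 1)" by (simp add: h4)
    also have "\<dots> = 2*x^3 + 2*x^2 + x" by algebra
    also have "\<dots> = 4*x^2 + 3*x + 2" by (simp add: h3)
    finally show ?thesis .
  qed
  have "(x^2+2*x+3) * (8 - 5*x + x^2) = x^4 - 3*x^3 + x^2 + x + 24" by algebra
  also have "\<dots> = 22" by (simp add: h3 h4)
  finally show "(x^2+2*x+3) * (8 - 5*x + x^2) = 22" .
  have "(x^3+x^2)*(8 - 5*x + x^2) = x^5 - 4*x^4 + 3*x^3 + 8*x^2" by algebra
  also have "\<dots> = 1 - 2*x + 7*x^2" by (simp add: h3 h4 h5)
  finally show "(x^3+x^2)*(8 - 5*x + x^2) = 1 - 2*x + 7*x^2" .
  have "x^3*(8 - 5*x + x^2) = x^5 - 5*x^4 + 8*x^3" by algebra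
  also have "\<dots> = 5 + x + 2*x^2" by (simp add: h3 h4 h5)
  finally show "x^3*(8 - 5*x + x^2) = 5 + x + 2*x^2" .
qed

lemma frac_aux: fixes N D T R :: complex assumes "D*T = 22" "N*T = R"
  shows "N/D = R/22"
proof -
  have D: "D \<noteq> 0" using assms(1) by auto
  have "N*22 = N*(D*T)" using assms(1) by simp
  also have "\<dots> = (N*T)*D" by (simp add: ac_simps)
  also have "\<dots> = R*D" using assms(2) by simp
  finally show ?thesis using D by (simp add: field_simps)
qed

lemma frac_id: fixes x :: complex assumes "x^3 = x^2 + x + 1"
  shows "(x^3+x^2)/(x^2+2*x+3) = (1 - 2*x + 7*x^2)/22"
    "x^3/(x^2+2*x+3) = (5 + x + 2*x^2)/22"
  using frac_aux[OF field_id(1)[OF assms] field_id(2)[OF assms]]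
    frac_aux[OF field_id(1)[OF assms] field_id(3)[OF assms]] by auto

theorem lemma2:
  fixes \<phi> :: real and \<phi>\<^sub>1 :: complex and k l :: int
  assumes "\<phi> ^ 3 = \<phi> ^ 2 + \<phi> + 1"
    and "\<phi>\<^sub>1 ^ 3 = \<phi>\<^sub>1 ^ 2 + \<phi>\<^sub>1 + 1"
    and "Im \<phi>\<^sub>1 \<noteq> 0"
  shows "let \<psi>\<^sub>1 = (\<phi>\<^sub>1 ^ 3 + \<phi>\<^sub>1 ^ 2) / (\<phi>\<^sub>1 ^ 2 + 2 * \<phi>\<^sub>1 + 3);
             \<zeta>\<^sub>1 = \<phi>\<^sub>1 ^ 3 / (\<phi>\<^sub>1 ^ 2 + 2 * \<phi>\<^sub>1 + 3);
             \<alpha> = (of_int k * \<phi> ^ 2 + of_int (k + l) * \<phi> ^ 3) / (\<phi> ^ 2 + 2 * \<phi> + 3);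
             \<beta> = cmod (2 * (of_int k * \<psi>\<^sub>1 + of_int l * \<zeta>\<^sub>1))
         in \<bar>\<alpha>\<bar> \<le> real_of_int (\<bar>k\<bar> + \<bar>l\<bar>) \<and> \<beta> \<ge> real_of_int (\<bar>k\<bar> + \<bar>l\<bar>) / 31"
proof -
  obtain a b where x: "\<phi>\<^sub>1 = Complex a b" by (cases "\<phi>\<^sub>1") auto
  have b0: "b \<noteq> 0" using assms(3) x by simp
  note cp = cubic_parts[OF assms(2)[unfolded x] b0]
  note ab = a_bounds[OF cp(2)]
  have ab1: "-0.42 < a" "a < -0.419" using ab by auto
  note fr = frac_id[OF assms(2)]
  have ok: "\<And>n::int. (of_int n :: complex) = complex_of_real (real_of_int n)" by simp
  have kl: "real_of_int (\<bar>k\<bar> + \<bar>l\<bar>) = \<bar>real_of_int k\<bar> + \<bar>real_of_int l\<bar>" by simp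
  have beta: "cmod (2 * (of_int k * ((\<phi>\<^sub>1 ^ 3 + \<phi>\<^sub>1 ^ 2) / (\<phi>\<^sub>1 ^ 2 + 2 * \<phi>\<^sub>1 + 3)) + of_int l * (\<phi>\<^sub>1 ^ 3 / (\<phi>\<^sub>1 ^ 2 + 2 * \<phi>\<^sub>1 + 3))))
     \<ge> real_of_int (\<bar>k\<bar> + \<bar>l\<bar>) / 31"
    unfolding fr ok kl unfolding x by (rule beta_part[OF cp(1) ab1])
  have alpha: "\<bar>(of_int k * \<phi> ^ 2 + of_int (k + l) * \<phi> ^ 3) / (\<phi> ^ 2 + 2 * \<phi> + 3)\<bar> \<le> real_of_int (\<bar>k\<bar> + \<bar>l\<bar>)"
    unfolding of_int_add of_int_abs by (rule alpha_part[OF assms(1)])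
  show ?thesis unfolding Let_def using alpha beta by blast
qed

end
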